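(* Let $F$ be a CNF formula and let $\pi$ be a derivation from $F$. Then $F \vDash \mathrm{ctx}(\pi).\mathrm{acc}(F,\pi)$, where for a program $\varepsilon$ and a CNF formula $G$ we write $\varepsilon.G=\{\varepsilon.C : C\in G\}$ and $F$ is identified with the dynamic formula $\{[\,].C : C\in F\}$ ($[\,]$ the empty program).
   Context: Variables, assignments, literals ($x,\neg x,\top,\bot$ with complements $\overline{x}=\neg x$, $\overline{\neg x}=x$, $\overline\top=\bot$, $\overline\bot=\top$), substitutions (maps $\sigma$ on literals with $\sigma(\top)=\top$, $\sigma(\overline l)=\overline{\sigma(l)}$; finite if $\sigma(x)=x$ for all but finitely many variables), and $I\circ\sigma$ (the assignment with $(I\circ\sigma)(x)=1$ iff $I\vDash\sigma(x)$) are as usual. A clause $l_1\vee\dots\vee l_n$ is satisfied iff some $l_i$ is; a cube $l_1\wedge\dots\wedge l_n$ iff all are. Negations: $\overline{l_1\vee\dots\vee l_n}=\overline{l_1}\wedge\dots\wedge\overline{l_n}$ and $\overline{l_1\wedge\dots\wedge l_n}=\overline{l_1}\vee\dots\vee\overline{l_n}$; reducts $C[\sigma]$ apply $\sigma$ to each literal, and $F[\sigma]=\{C[\sigma]:C\in F\}$. A CNF formula is a finite set of clauses and cubes; a literal $l$ as a constraint is the unit clause $l$. Conflict detection $\vdash_\bot F$ is unit propagation: let $U(F)$ be the least set of literals containing $\top$, all literals of cubes in $F$, and such that for every clause $l_1\vee\dots\vee l_n\in F$ and $i$, if $\overline{l_j}\in U(F)$ for all $j\ne i$ then $l_i\in U(F)$;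 then $\vdash_\bot F$ iff $U(F)$ contains $\bot$, or contains $x$ and $\neg x$ for some variable $x$, or some clause of $F$ has all complements of its literals in $U(F)$. A clause $C$ is RUP over $F$ if $\vdash_\bot F\cup\{\overline C\}$; SR over $F$ upon $\sigma$ if $\vdash_\bot\{\overline{C[\sigma]}\}$ and $\vdash_\bot F\cup\{\overline C,\overline{D[\sigma]}\}$ for all $D\in F$; WSR over $F$ upon $\sigma$ modulo a CNF formula $G$ if $\vdash_\bot F\cup\{\overline C,\overline{D[\sigma]}\}$ for all $D\in(F\setminus G)\cup\{C\}$. Instructions are $\mathrm{del}(C)$, $\mathrm{rup}(C)$, $\mathrm{sr}(C,\sigma)$, $\mathrm{wsr}(C,\sigma,G)$ ($C$ clause, $\sigma$ finite substitution, $G$ CNF formula). The accumulated formula: $\mathrm{acc}(F,[\,])=F$, $\mathrm{acc}(F,\pi\,\mathrm{del}(C))=\mathrm{acc}(F,\pi)\setminus\{C\}$, $\mathrm{acc}(F,\pi\,\mathrm{rup}(C))=\mathrm{acc}(F,\pi\,\mathrm{sr}(C,\sigma))=\mathrm{acc}(F,\pi)\cup\{C\}$, $\mathrm{acc}(F,\pi\,\mathrm{wsr}(C,\sigma,G))=(\mathrm{acc}(F,\pi)\setminus G)\cup\{C\}$. Derivations from $F$: the empty list is one; if $\pi$ is one then so is $\pi\,\mathrm{del}(C)$, and so are $\pi\,\mathrm{rup}(C)$, $\pi\,\mathrm{sr}(C,\sigma)$, $\pi\,\mathrm{wsr}(C,\sigma,G)$ provided $C$ is respectively RUP over, SR over upon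 $\sigma$, or WSR over upon $\sigma$ modulo $G$, the formula $\mathrm{acc}(F,\pi)$. Programs: program items are $\langle\sigma\rangle$ ($I\otimes J\vDash\langle\sigma\rangle$ iff $J=I\circ\sigma$), tests $T?$ ($I\otimes J\vDash T?$ iff $I\vDash T$, $J=I$), choices $\varepsilon_1\sqcup\varepsilon_2$ (either), and branches $\mathrm{if}\ T\ \mathrm{then}\ \varepsilon_1\parallel\varepsilon_0$ (behave as $\varepsilon_1$ if $I\vDash T$, as $\varepsilon_0$ otherwise); a program is a list of items with sequential-composition semantics (the empty program $[\,]$ relates $I$ to $I$ only). We write $\mathrm{if}\ T\ \mathrm{then}\ \varepsilon$ for $\mathrm{if}\ T\ \mathrm{then}\ \varepsilon\parallel[\,]$. A dynamic constraint $\varepsilon.C$ is satisfied by $I$ iff $J\vDash C$ for all $J$ with $I\otimes J\vDash\varepsilon$; dynamic formulas are finite sets of these, interpreted conjunctively. The context of an instruction list: $\mathrm{ctx}([\,])=[\,]$, $\mathrm{ctx}(\pi\,\mathrm{del}(C))=\mathrm{ctx}(\pi\,\mathrm{rup}(C))=\mathrm{ctx}(\pi)$, $\mathrm{ctx}(\pi\,\mathrm{sr}(C,\sigma))=\mathrm{ctx}(\pi\,\mathrm{wsr}(C,\sigma,G))=\mathrm{ctx}(\pi)\,(\mathrm{if}\ \overline C\ \mathrm{then}\ \langle\sigma\rangle)$. *)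

theory Defs
  imports Main
begin

datatype 'v lit = Pos 'v | Neg 'v | Top | Bot

fun compl :: "'v lit \<Rightarrow> 'v lit" where
  "compl (Pos x) = Neg x"
| "compl (Neg x) = Pos x"
| "compl Top = Bot"
| "compl Bot = Top"

type_synonym 'v assignment = "'v \<Rightarrow> bool"

fun lit_sat :: "'v assignment \<Rightarrow> 'v lit \<Rightarrow> bool" where
  "lit_sat I (Pos x) = I x"
| "lit_sat I (Neg x) = (\<not> I x)"
| "lit_sat I Top = True"
| "lit_sat I Bot = False"

type_synonym 'v subst = "'v \<Rightarrow> 'v lit"

fun subst_lit :: "'v subst \<Rightarrow> 'v lit \<Rightarrow> 'v lit" where
  "subst_lit \<sigma> (Pos x) = \<sigma> x"
| "subst_lit \<sigma> (Neg x) = compl (\<sigma> x)"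
| "subst_lit \<sigma> Top = Top"
| "subst_lit \<sigma> Bot = Bot"

definition finite_subst :: "'v subst \<Rightarrow> bool" where
  "finite_subst \<sigma> \<longleftrightarrow> finite {x. \<sigma> x \<noteq> Pos x}"

definition compose_asg :: "'v assignment \<Rightarrow> 'v subst \<Rightarrow> 'v assignment" where
  "compose_asg I \<sigma> = (\<lambda>x. lit_sat I (\<sigma> x))"

datatype 'v constr = Clause "'v lit list" | Cube "'v lit list"

fun sat :: "'v assignment \<Rightarrow> 'v constr \<Rightarrow> bool" where
  "sat I (Clause ls) = (\<exists>l\<in>set ls. lit_sat I l)"
| "sat I (Cube ls) = (\<forall>l\<in>set ls. lit_sat I l)"

fun neg :: "'v constr \<Rightarrow> 'v constr" where
  "neg (Clause ls) = Cube (map compl ls)"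
| "neg (Cube ls) = Clause (map compl ls)"

fun reduct :: "'v constr \<Rightarrow> 'v subst \<Rightarrow> 'v constr" where
  "reduct (Clause ls) \<sigma> = Clause (map (subst_lit \<sigma>) ls)"
| "reduct (Cube ls) \<sigma> = Cube (map (subst_lit \<sigma>) ls)"

text \<open>A CNF formula is a finite set of clauses and cubes (finiteness imposed separately).\<close>
type_synonym 'v cnf = "'v constr set"

inductive_set U :: "'v cnf \<Rightarrow> 'v lit set" for F :: "'v cnf" where
  U_top: "Top \<in> U F"
| U_cube: "Cube ls \<in> F \<Longrightarrow> l \<in> set ls \<Longrightarrow> l \<in> U F"
| U_clause: "Clause ls \<in> F \<Longrightarrow> i < length ls \<Longrightarrow>
     (\<forall>j<length ls. j \<noteq> i \<longrightarrow> compl (ls ! j) \<in> U F) \<Longrightarrow> ls ! i \<in> U F"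

definition conflict :: "'v cnf \<Rightarrow> bool" where
  "conflict F \<longleftrightarrow> Bot \<in> U F \<or> (\<exists>x. Pos x \<in> U F \<and> Neg x \<in> U F)
     \<or> (\<exists>ls. Clause ls \<in> F \<and> (\<forall>l\<in>set ls. compl l \<in> U F))"

definition is_rup :: "'v cnf \<Rightarrow> 'v lit list \<Rightarrow> bool" where
  "is_rup F C \<longleftrightarrow> conflict (F \<union> {neg (Clause C)})"

definition is_sr :: "'v cnf \<Rightarrow> 'v lit list \<Rightarrow> 'v subst \<Rightarrow> bool" where
  "is_sr F C \<sigma> \<longleftrightarrow> conflict {neg (reduct (Clause C) \<sigma>)}
     \<and> (\<forall>D\<in>F. conflict (F \<union> {neg (Clause C), neg (reduct D \<sigma>)}))"

definition is_wsr :: "'v cnf \<Rightarrow> 'v lit list \<Rightarrow> 'v subst \<Rightarrow> 'v cnf \<Rightarrow> bool" where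
  "is_wsr F C \<sigma> G \<longleftrightarrow>
     (\<forall>D\<in>(F - G) \<union> {Clause C}. conflict (F \<union> {neg (Clause C), neg (reduct D \<sigma>)}))"

datatype 'v instr =
    Del "'v lit list"
  | Rup "'v lit list"
  | Sr "'v lit list" "'v subst"
  | Wsr "'v lit list" "'v subst" "'v cnf"

fun acc_step :: "'v instr \<Rightarrow> 'v cnf \<Rightarrow> 'v cnf" where
  "acc_step (Del C) F = F - {Clause C}"
| "acc_step (Rup C) F = F \<union> {Clause C}"
| "acc_step (Sr C \<sigma>) F = F \<union> {Clause C}"
| "acc_step (Wsr C \<sigma> G) F = (F - G) \<union> {Clause C}"

text \<open>Instruction lists are processed from left to right: acc F (pi @ [i]) = step i (acc F pi).\<close>
definition acc :: "'v cnf \<Rightarrow> 'v instr list \<Rightarrow> 'v cnf" where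
  "acc F \<pi> = fold acc_step \<pi> F"

inductive derivation :: "'v cnf \<Rightarrow> 'v instr list \<Rightarrow> bool" for F :: "'v cnf" where
  der_nil: "derivation F []"
| der_del: "derivation F \<pi> \<Longrightarrow> derivation F (\<pi> @ [Del C])"
| der_rup: "derivation F \<pi> \<Longrightarrow> is_rup (acc F \<pi>) C \<Longrightarrow> derivation F (\<pi> @ [Rup C])"
| der_sr: "derivation F \<pi> \<Longrightarrow> finite_subst \<sigma> \<Longrightarrow> is_sr (acc F \<pi>) C \<sigma>
     \<Longrightarrow> derivation F (\<pi> @ [Sr C \<sigma>])"
| der_wsr: "derivation F \<pi> \<Longrightarrow> finite_subst \<sigma> \<Longrightarrow> finite G \<Longrightarrow> is_wsr (acc F \<pi>) C \<sigma> G
     \<Longrightarrow> derivation F (\<pi> @ [Wsr C \<sigma> G])"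

datatype 'v item =
    SubstI "'v subst"
  | Test "'v constr"
  | Choice "'v item list" "'v item list"
  | Branch "'v constr" "'v item list" "'v item list"

type_synonym 'v program = "'v item list"

text \<open>item_rel it I J means I (x) J |= it; prog_rel is sequential composition (first item first).\<close>
inductive item_rel :: "'v item \<Rightarrow> 'v assignment \<Rightarrow> 'v assignment \<Rightarrow> bool"
  and prog_rel :: "'v program \<Rightarrow> 'v assignment \<Rightarrow> 'v assignment \<Rightarrow> bool" where
  rel_subst: "item_rel (SubstI \<sigma>) I (compose_asg I \<sigma>)"
| rel_test: "sat I T \<Longrightarrow> item_rel (Test T) I I"
| rel_choice1: "prog_rel e1 I J \<Longrightarrow> item_rel (Choice e1 e2) I J"
| rel_choice2: "prog_rel e2 I J \<Longrightarrow> item_rel (Choice e1 e2) I J"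
| rel_branch1: "sat I T \<Longrightarrow> prog_rel e1 I J \<Longrightarrow> item_rel (Branch T e1 e0) I J"
| rel_branch0: "\<not> sat I T \<Longrightarrow> prog_rel e0 I J \<Longrightarrow> item_rel (Branch T e1 e0) I J"
| rel_nil: "prog_rel [] I I"
| rel_cons: "item_rel it I K \<Longrightarrow> prog_rel p K J \<Longrightarrow> prog_rel (it # p) I J"

type_synonym 'v dyn_constr = "'v program \<times> 'v constr"
type_synonym 'v dyn_formula = "'v dyn_constr set"

definition dyn_sat :: "'v assignment \<Rightarrow> 'v dyn_constr \<Rightarrow> bool" where
  "dyn_sat I d \<longleftrightarrow> (\<forall>J. prog_rel (fst d) I J \<longrightarrow> sat J (snd d))"

definition dyn_models :: "'v assignment \<Rightarrow> 'v dyn_formula \<Rightarrow> bool" where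
  "dyn_models I D \<longleftrightarrow> (\<forall>d\<in>D. dyn_sat I d)"

definition dyn_entails :: "'v dyn_formula \<Rightarrow> 'v dyn_formula \<Rightarrow> bool" where
  "dyn_entails D1 D2 \<longleftrightarrow> (\<forall>I. dyn_models I D1 \<longrightarrow> dyn_models I D2)"

text \<open>eps.G = {eps.C : C in G}; a CNF F is identified with [].F.\<close>
definition dyn_of :: "'v program \<Rightarrow> 'v cnf \<Rightarrow> 'v dyn_formula" where
  "dyn_of \<epsilon> G = (\<lambda>C. (\<epsilon>, C)) ` G"

fun ctx_step :: "'v instr \<Rightarrow> 'v program \<Rightarrow> 'v program" where
  "ctx_step (Del C) p = p"
| "ctx_step (Rup C) p = p"
| "ctx_step (Sr C \<sigma>) p = p @ [Branch (neg (Clause C)) [SubstI \<sigma>] []]"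
| "ctx_step (Wsr C \<sigma> G) p = p @ [Branch (neg (Clause C)) [SubstI \<sigma>] []]"

definition ctx :: "'v instr list \<Rightarrow> 'v program" where
  "ctx \<pi> = fold ctx_step \<pi> []"

end

theory Submission
  imports Defs
begin

lemma compl_sat[simp]: "lit_sat J (compl l) = (\<not> lit_sat J l)"
  by (cases l) auto

lemma neg_sat[simp]: "sat J (neg c) = (\<not> sat J c)"
  by (cases c) auto

lemma subst_sat[simp]: "lit_sat K (subst_lit \<sigma> l) = lit_sat (compose_asg K \<sigma>) l"
  by (cases l) (auto simp: compose_asg_def)

lemma reduct_sat[simp]: "sat K (reduct D \<sigma>) = sat (compose_asg K \<sigma>) D"
  by (cases D) auto

lemma U_sound0:
  assumes M: "\<forall>c\<in>G. sat J c"
  shows "l \<in> U G \<Longrightarrow> lit_sat J l"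
proof (induction rule: U.induct)
  case U_top then show ?case by simp
next
  case (U_cube ls l)
  from M U_cube.hyps(1) have "sat J (Cube ls)" by blast
  then show ?case using U_cube.hyps(2) by simp
next
  case (U_clause ls i)
  from M U_clause.hyps(1) have "sat J (Clause ls)" by blast
  then obtain l where l: "l \<in> set ls" "lit_sat J l" by auto
  then obtain k where k: "k < length ls" "ls ! k = l" by (metis in_set_conv_nth)
  show ?case
  proof (cases "k = i")
    case True then show ?thesis using k l by simp
  next
    case False
    have "\<forall>j<length ls. j \<noteq> i \<longrightarrow> compl (ls ! j) \<in> U G \<and> lit_sat J (compl (ls ! j))"
      using U_clause.IH .
    then have "lit_sat J (compl (ls ! k))" using False k(1) by blast
    then show ?thesis using k l by simp
  qed
qed

lemma U_sound: "l \<in> U G \<Longrightarrow> \<forall>c\<in>G. sat J c \<Longrightarrow> lit_sat J l"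
  using U_sound0 by blast

lemma conflict_sound: "conflict G \<Longrightarrow> \<forall>c\<in>G. sat J c \<Longrightarrow> False"
  unfolding conflict_def
proof (elim disjE exE conjE)
  assume "Bot \<in> U G" "\<forall>c\<in>G. sat J c"
  then show False using U_sound[of Bot G J] by simp
next
  fix x assume "Pos x \<in> U G" "Neg x \<in> U G" "\<forall>c\<in>G. sat J c"
  then show False using U_sound[of "Pos x" G J] U_sound[of "Neg x" G J] by simp
next
  fix ls assume a: "Clause ls \<in> G" "\<forall>l\<in>set ls. compl l \<in> U G" "\<forall>c\<in>G. sat J c"
  have "\<forall>l\<in>set ls. \<not> lit_sat J l"
  proof
    fix l assume "l \<in> set ls"
    then have "compl l \<in> U G" using a(2) by blast
    then have "lit_sat J (compl l)" using U_sound a(3) by blast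
    then show "\<not> lit_sat J l" by simp
  qed
  moreover have "sat J (Clause ls)" using a by blast
  ultimately show False by auto
qed

lemma prog_nil: "prog_rel [] I J \<Longrightarrow> J = I"
  by (erule prog_rel.cases) auto

lemma item_subst: "item_rel (SubstI \<sigma>) K N \<Longrightarrow> N = compose_asg K \<sigma>"
  by (erule item_rel.cases) auto

lemma prog_cons: "prog_rel (it # p) I J \<Longrightarrow> \<exists>K. item_rel it I K \<and> prog_rel p K J"
  by (erule prog_rel.cases) auto

lemma prog_append: "prog_rel (p @ q) I J \<Longrightarrow> \<exists>K. prog_rel p I K \<and> prog_rel q K J"
proof (induction p arbitrary: I)
  case Nil then show ?case by (auto intro: rel_nil)
next
  case (Cons it p)
  from Cons.prems have "prog_rel (it # (p @ q)) I J" by simp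
  then obtain K where "item_rel it I K" "prog_rel (p @ q) K J"
    using prog_cons by blast
  with Cons.IH show ?case by (meson rel_cons)
qed

lemma prog_branch:
  assumes "prog_rel [Branch T [SubstI \<sigma>] []] K J"
  shows "J = (if sat K T then compose_asg K \<sigma> else K)"
proof -
  from assms obtain M where M: "item_rel (Branch T [SubstI \<sigma>] []) K M" "prog_rel [] M J"
    using prog_cons by blast
  then have J: "J = M" using prog_nil by blast
  from M(1) show ?thesis
  proof (cases rule: item_rel.cases)
    case rel_branch1
    then obtain N where "item_rel (SubstI \<sigma>) K N" "prog_rel [] N M"
      using prog_cons by blast
    then show ?thesis using rel_branch1 J prog_nil item_subst by metis
  next
    case rel_branch0
    then show ?thesis using J prog_nil by auto
  qed
qed

lemma acc_snoc[simp]: "acc F (\<pi> @ [i]) = acc_step i (acc F \<pi>)"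
  by (simp add: acc_def)

lemma ctx_snoc[simp]: "ctx (\<pi> @ [i]) = ctx_step i (ctx \<pi>)"
  by (simp add: ctx_def)

lemma main:
  assumes "derivation F \<pi>"
  shows "\<forall>c\<in>F. sat I c \<Longrightarrow> prog_rel (ctx \<pi>) I J \<Longrightarrow> \<forall>c\<in>acc F \<pi>. sat J c"
  using assms
proof (induction arbitrary: J rule: derivation.induct)
  case der_nil
  then show ?case by (auto simp: acc_def ctx_def dest: prog_nil)
next
  case (der_del \<pi> C)
  then show ?case by auto
next
  case (der_rup \<pi> C)
  then have G: "\<forall>c\<in>acc F \<pi>. sat J c" by auto
  have "sat J (Clause C)"
  proof (rule ccontr)
    assume "\<not> sat J (Clause C)"
    then have "\<forall>c\<in>acc F \<pi> \<union> {neg (Clause C)}. sat J c" using G by auto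
    moreover have "is_rup (acc F \<pi>) C" using der_rup.hyps by blast
    ultimately show False using conflict_sound unfolding is_rup_def by blast
  qed
  then show ?case using G by auto
next
  case (der_sr \<pi> \<sigma> C)
  from der_sr.prems(2) obtain K where K: "prog_rel (ctx \<pi>) I K"
      "prog_rel [Branch (neg (Clause C)) [SubstI \<sigma>] []] K J"
    by (auto dest: prog_append)
  have G: "\<forall>c\<in>acc F \<pi>. sat K c" using der_sr K by blast
  show ?case
  proof (cases "sat K (Clause C)")
    case True
    then have "J = K" using prog_branch[OF K(2)] by auto
    then show ?thesis using G True by auto
  next
    case False
    then have J: "J = compose_asg K \<sigma>" using prog_branch[OF K(2)] by auto
    have 1: "sat J (Clause C)"
    proof (rule ccontr)
      assume "\<not> sat J (Clause C)"
      then have "\<forall>c\<in>{neg (reduct (Clause C) \<sigma>)}. sat K c" using J by simp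
      moreover have "is_sr (acc F \<pi>) C \<sigma>" using der_sr.hyps by blast
      ultimately show False using conflict_sound unfolding is_sr_def by blast
    qed
    have 2: "sat J D" if D: "D \<in> acc F \<pi>" for D
    proof (rule ccontr)
      assume "\<not> sat J D"
      then have "\<forall>c\<in>acc F \<pi> \<union> {neg (Clause C), neg (reduct D \<sigma>)}. sat K c"
        using J G False by auto
      moreover have "is_sr (acc F \<pi>) C \<sigma>" using der_sr.hyps by blast
      ultimately show False using D conflict_sound unfolding is_sr_def by blast
    qed
    show ?thesis using 1 2 by auto
  qed
next
  case (der_wsr \<pi> \<sigma> G' C)
  from der_wsr.prems(2) obtain K where K: "prog_rel (ctx \<pi>) I K"
      "prog_rel [Branch (neg (Clause C)) [SubstI \<sigma>] []] K J"
    by (auto dest: prog_append)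
  have G: "\<forall>c\<in>acc F \<pi>. sat K c" using der_wsr K by blast
  show ?case
  proof (cases "sat K (Clause C)")
    case True
    then have "J = K" using prog_branch[OF K(2)] by auto
    then show ?thesis using G True by auto
  next
    case False
    then have J: "J = compose_asg K \<sigma>" using prog_branch[OF K(2)] by auto
    have 2: "sat J D" if D: "D \<in> (acc F \<pi> - G') \<union> {Clause C}" for D
    proof (rule ccontr)
      assume "\<not> sat J D"
      then have "\<forall>c\<in>acc F \<pi> \<union> {neg (Clause C), neg (reduct D \<sigma>)}. sat K c"
        using J G False by auto
      moreover have "is_wsr (acc F \<pi>) C \<sigma> G'" using der_wsr.hyps by blast
      ultimately show False using D conflict_sound unfolding is_wsr_def by blast
    qed
    show ?thesis using 2 by auto
  qed
qed

theorem mainTheorem3: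
  fixes F :: "'v cnf" and \<pi> :: "'v instr list"
  assumes "finite F"
    and "derivation F \<pi>"
  shows "dyn_entails (dyn_of [] F) (dyn_of (ctx \<pi>) (acc F \<pi>))"
  unfolding dyn_entails_def dyn_models_def dyn_of_def dyn_sat_def
proof (intro allI impI ballI)
  fix I d J
  assume h: "\<forall>d\<in>(\<lambda>C. ([], C)) ` F. \<forall>J. prog_rel (fst d) I J \<longrightarrow> sat J (snd d)"
    and d: "d \<in> (\<lambda>C. (ctx \<pi>, C)) ` acc F \<pi>" and r: "prog_rel (fst d) I J"
  have "\<forall>c\<in>F. sat I c" using h by (auto intro: rel_nil)
  moreover obtain c where "d = (ctx \<pi>, c)" "c \<in> acc F \<pi>" using d by auto
  ultimately show "sat J (snd d)" using main[OF assms(2)] r by auto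
qed

end
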